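(* Let $P$ be a field and $W=W(X)$ the free commutative, free associative, or free Lie algebra over $P$ on a finite set $X$. Let $u\in W$ be a basic element, i.e. an element belonging to some free generating set (base) of $W$. Then $$\bigcap_{\eta\in\mathrm{End}(W),\ \eta(u)=0}\mathrm{Ker}\,\eta=\langle u\rangle,$$ where $\langle u\rangle$ is the ideal of $W$ generated by $u$.
   Context: $\mathrm{End}(W)$ denotes the set of all algebra endomorphisms of $W$. In the paper's notation this is the statement $\langle u\rangle''=\langle u\rangle$ for the Galois correspondence $T'=\{\eta\in\mathrm{End}(W): T\subset\mathrm{Ker}\,\eta\}$, $A'=\bigcap_{\eta\in A}\mathrm{Ker}\,\eta$. *)

theory Defs
  imports "HOL-Library.Poly_Mapping"
begin

(* Words over an alphabet 'v, made a monoid under concatenation, so that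
   ('v word \<Rightarrow>\<^sub>0 'a) is the free associative (unital) algebra over 'a on 'v. *)
datatype 'v word = Word (letters: "'v list")

instantiation word :: (type) monoid_add
begin
definition zero_word :: "'v word" where "zero_word = Word []"
definition plus_word :: "'v word \<Rightarrow> 'v word \<Rightarrow> 'v word"
  where "plus_word u v = Word (letters u @ letters v)"
instance
proof
  fix a b c :: "'v word"
  show "a + b + c = a + (b + c)" by (simp add: plus_word_def)
  show "0 + a = a" by (cases a) (simp add: plus_word_def zero_word_def)
  show "a + 0 = a" by (cases a) (simp add: plus_word_def zero_word_def)
qed
end

type_synonym ('a, 'x) comm_poly = "('x \<Rightarrow>\<^sub>0 nat) \<Rightarrow>\<^sub>0 'a"
type_synonym ('a, 'x) assoc_poly = "'x word \<Rightarrow>\<^sub>0 'a"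

definition smult :: "'a::semiring_0 \<Rightarrow> ('m \<Rightarrow>\<^sub>0 'a) \<Rightarrow> ('m \<Rightarrow>\<^sub>0 'a)"
  where "smult c p = Poly_Mapping.map (\<lambda>b. c * b) p"

definition avar :: "'x \<Rightarrow> ('a::zero_neq_one, 'x) assoc_poly"
  where "avar x = Poly_Mapping.single (Word [x]) 1"

definition alg_end :: "(('m::monoid_add \<Rightarrow>\<^sub>0 'a::field) \<Rightarrow> ('m \<Rightarrow>\<^sub>0 'a)) \<Rightarrow> bool" where
  "alg_end \<eta> \<longleftrightarrow> (\<forall>p q. \<eta> (p + q) = \<eta> p + \<eta> q) \<and> (\<forall>c p. \<eta> (smult c p) = smult c (\<eta> p))
     \<and> (\<forall>p q. \<eta> (p * q) = \<eta> p * \<eta> q) \<and> \<eta> 1 = 1"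

definition is_ideal :: "('m::monoid_add \<Rightarrow>\<^sub>0 'a::field) set \<Rightarrow> bool" where
  "is_ideal I \<longleftrightarrow> 0 \<in> I \<and> (\<forall>a\<in>I. \<forall>b\<in>I. a + b \<in> I) \<and> (\<forall>c. \<forall>a\<in>I. smult c a \<in> I)
     \<and> (\<forall>a\<in>I. \<forall>b. a * b \<in> I \<and> b * a \<in> I)"

definition ideal_gen :: "('m::monoid_add \<Rightarrow>\<^sub>0 'a::field) \<Rightarrow> ('m \<Rightarrow>\<^sub>0 'a) set" where
  "ideal_gen u = \<Inter>{I. is_ideal I \<and> u \<in> I}"

definition eval_comm :: "('v \<Rightarrow> ('m::comm_monoid_add \<Rightarrow>\<^sub>0 'a::field)) \<Rightarrow> (('v \<Rightarrow>\<^sub>0 nat) \<Rightarrow>\<^sub>0 'a)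
    \<Rightarrow> ('m \<Rightarrow>\<^sub>0 'a)" where
  "eval_comm \<sigma> P = (\<Sum>m\<in>Poly_Mapping.keys P. smult (Poly_Mapping.lookup P m) (\<Prod>v\<in>Poly_Mapping.keys m. \<sigma> v ^ Poly_Mapping.lookup m v))"

definition eval_assoc :: "('v \<Rightarrow> ('m::monoid_add \<Rightarrow>\<^sub>0 'a::field)) \<Rightarrow> ('v word \<Rightarrow>\<^sub>0 'a)
    \<Rightarrow> ('m \<Rightarrow>\<^sub>0 'a)" where
  "eval_assoc \<sigma> P = (\<Sum>w\<in>Poly_Mapping.keys P. smult (Poly_Mapping.lookup P w) (foldr (\<lambda>v acc. \<sigma> v * acc) (letters w) 1))"

(* B is a free generating set (base): the natural map from the free algebra on B is bijective *)
definition comm_free_gen :: "('a::field, 'x) comm_poly set \<Rightarrow> bool" where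
  "comm_free_gen B \<longleftrightarrow>
     bij_betw (eval_comm id) {P :: (('a, 'x) comm_poly, nat) poly_mapping \<Rightarrow>\<^sub>0 'a. \<forall>m\<in>Poly_Mapping.keys P. Poly_Mapping.keys m \<subseteq> B} UNIV"

definition assoc_free_gen :: "('a::field, 'x) assoc_poly set \<Rightarrow> bool" where
  "assoc_free_gen B \<longleftrightarrow>
     bij_betw (eval_assoc id) {P :: (('a, 'x) assoc_poly) word \<Rightarrow>\<^sub>0 'a. \<forall>w\<in>Poly_Mapping.keys P. set (letters w) \<subseteq> B} UNIV"

definition bracket :: "('m::monoid_add \<Rightarrow>\<^sub>0 'a::field) \<Rightarrow> ('m \<Rightarrow>\<^sub>0 'a) \<Rightarrow> ('m \<Rightarrow>\<^sub>0 'a)"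
  where "bracket p q = p * q - q * p"

inductive_set lie_closure :: "('m::monoid_add \<Rightarrow>\<^sub>0 'a::field) set \<Rightarrow> ('m \<Rightarrow>\<^sub>0 'a) set"
  for G where
    gen: "g \<in> G \<Longrightarrow> g \<in> lie_closure G"
  | zero: "0 \<in> lie_closure G"
  | add: "p \<in> lie_closure G \<Longrightarrow> q \<in> lie_closure G \<Longrightarrow> p + q \<in> lie_closure G"
  | smult: "p \<in> lie_closure G \<Longrightarrow> smult c p \<in> lie_closure G"
  | brk: "p \<in> lie_closure G \<Longrightarrow> q \<in> lie_closure G \<Longrightarrow> bracket p q \<in> lie_closure G"

(* free Lie algebra on 'x, realised as the Lie subalgebra of P<X> generated by X *)
definition free_lie :: "('a::field, 'x) assoc_poly set" where
  "free_lie = lie_closure (range avar)"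

definition lie_free_gen :: "('a::field, 'x) assoc_poly set \<Rightarrow> bool" where
  "lie_free_gen B \<longleftrightarrow> B \<subseteq> free_lie \<and>
     bij_betw (eval_assoc id) (lie_closure (avar ` B)) free_lie"

definition lie_end :: "(('a::field, 'x) assoc_poly \<Rightarrow> ('a, 'x) assoc_poly) \<Rightarrow> bool" where
  "lie_end \<eta> \<longleftrightarrow> (\<forall>p\<in>free_lie. \<eta> p \<in> free_lie)
     \<and> (\<forall>p\<in>free_lie. \<forall>q\<in>free_lie. \<eta> (p + q) = \<eta> p + \<eta> q)
     \<and> (\<forall>c. \<forall>p\<in>free_lie. \<eta> (smult c p) = smult c (\<eta> p))
     \<and> (\<forall>p\<in>free_lie. \<forall>q\<in>free_lie. \<eta> (bracket p q) = bracket (\<eta> p) (\<eta> q))"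

definition lie_ideal :: "('a::field, 'x) assoc_poly set \<Rightarrow> bool" where
  "lie_ideal I \<longleftrightarrow> I \<subseteq> free_lie \<and> 0 \<in> I \<and> (\<forall>a\<in>I. \<forall>b\<in>I. a + b \<in> I)
     \<and> (\<forall>c. \<forall>a\<in>I. smult c a \<in> I) \<and> (\<forall>a\<in>I. \<forall>b\<in>free_lie. bracket a b \<in> I)"

definition lie_ideal_gen :: "('a::field, 'x) assoc_poly \<Rightarrow> ('a, 'x) assoc_poly set" where
  "lie_ideal_gen u = \<Inter>{I. lie_ideal I \<and> u \<in> I}"

end

theory Submission
  imports Defs
begin



lemma lookup_smult: "Poly_Mapping.lookup (smult c p) k = c * Poly_Mapping.lookup p k"
  by (simp add: smult_def map.rep_eq when_def)

lemma smult_add: "smult c (p + q) = smult c p + smult c q"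
  by (rule poly_mapping_eqI) (simp add: lookup_smult lookup_add algebra_simps)

lemma smult_add_left: "smult (c + d) p = smult c p + smult d p"
  by (rule poly_mapping_eqI) (simp add: lookup_smult lookup_add algebra_simps)

lemma smult_0_left [simp]: "smult 0 p = 0"
  by (rule poly_mapping_eqI) (simp add: lookup_smult)

lemma smult_0_right [simp]: "smult c 0 = 0"
  by (rule poly_mapping_eqI) (simp add: lookup_smult)

lemma smult_1 [simp]: "smult (1::'a::field) p = p"
  by (rule poly_mapping_eqI) (simp add: lookup_smult)

lemma smult_smult: "smult c (smult d p) = smult (c * d) p"
  by (rule poly_mapping_eqI) (simp add: lookup_smult mult.assoc)

lemma smult_minus1: "smult (-1::'a::field) p = - p"
  by (rule poly_mapping_eqI) (simp add: lookup_smult)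

lemma smult_diff: "smult (c::'a::field) (p - q) = smult c p - smult c q"
  by (rule poly_mapping_eqI) (simp add: lookup_smult lookup_minus algebra_simps)

lemma keys_smult: "Poly_Mapping.keys (smult c p) \<subseteq> Poly_Mapping.keys p"
  by (auto simp: in_keys_iff lookup_smult)

lemma poly_expand: "p = (\<Sum>k\<in>Poly_Mapping.keys p. Poly_Mapping.single k (Poly_Mapping.lookup p k))"
proof (rule poly_mapping_eqI)
  fix k
  show "Poly_Mapping.lookup p k = Poly_Mapping.lookup (\<Sum>k\<in>Poly_Mapping.keys p. Poly_Mapping.single k (Poly_Mapping.lookup p k)) k"
    by (simp add: lookup_sum lookup_single when_def in_keys_iff)
qed

lemma smult_conv: "smult c p = Poly_Mapping.single 0 c * (p :: 'm::monoid_add \<Rightarrow>\<^sub>0 'a::field)"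
  by (simp add: smult_def mult_map_scale_conv_mult)

lemma single0_comm: "Poly_Mapping.single 0 c * (p :: 'm::monoid_add \<Rightarrow>\<^sub>0 'a::field) = p * Poly_Mapping.single 0 c"
proof -
  have "Poly_Mapping.single 0 c * (\<Sum>k\<in>Poly_Mapping.keys p. Poly_Mapping.single k (Poly_Mapping.lookup p k))
     = (\<Sum>k\<in>Poly_Mapping.keys p. Poly_Mapping.single k (Poly_Mapping.lookup p k)) * Poly_Mapping.single 0 c"
    by (simp add: sum_distrib_left sum_distrib_right mult_single mult.commute)
  then show ?thesis using poly_expand[of p] by simp
qed

lemma smult_mult_left: "smult c p * q = smult c (p * (q :: 'm::monoid_add \<Rightarrow>\<^sub>0 'a::field))"
  by (simp add: smult_conv mult.assoc)

lemma smult_mult_right: "p * smult c q = smult c (p * (q :: 'm::monoid_add \<Rightarrow>\<^sub>0 'a::field))"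
proof -
  have "p * (Poly_Mapping.single 0 c * q) = (p * Poly_Mapping.single 0 c) * q" by (simp add: mult.assoc)
  also have "\<dots> = Poly_Mapping.single 0 c * (p * q)" by (metis single0_comm mult.assoc)
  finally show ?thesis by (simp only: smult_conv)
qed

lemma smult_sum: "smult c (sum f A) = (\<Sum>x\<in>A. smult c (f x))"
  by (induction A rule: infinite_finite_induct) (simp_all add: smult_add)


section \<open>Linear extension\<close>

definition lin_ext :: "('k \<Rightarrow> ('m::monoid_add \<Rightarrow>\<^sub>0 'a::field)) \<Rightarrow> ('k \<Rightarrow>\<^sub>0 'a) \<Rightarrow> ('m \<Rightarrow>\<^sub>0 'a)" where
  "lin_ext mon P = (\<Sum>k\<in>Poly_Mapping.keys P. smult (Poly_Mapping.lookup P k) (mon k))"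

lemma lin_ext_superset:
  assumes "finite S" "Poly_Mapping.keys P \<subseteq> S"
  shows "lin_ext mon P = (\<Sum>k\<in>S. smult (Poly_Mapping.lookup P k) (mon k))"
  unfolding lin_ext_def
  by (rule sum.mono_neutral_left) (use assms in \<open>auto simp: in_keys_iff\<close>)

lemma lin_ext_add: "lin_ext mon (P + Q) = lin_ext mon P + lin_ext mon Q"
proof -
  let ?S = "Poly_Mapping.keys P \<union> Poly_Mapping.keys Q"
  have "lin_ext mon (P + Q) = (\<Sum>k\<in>?S. smult (Poly_Mapping.lookup (P + Q) k) (mon k))"
    by (rule lin_ext_superset) (auto dest: keys_add[THEN subsetD])
  also have "\<dots> = (\<Sum>k\<in>?S. smult (Poly_Mapping.lookup P k) (mon k)) + (\<Sum>k\<in>?S. smult (Poly_Mapping.lookup Q k) (mon k))"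
    by (simp add: lookup_add smult_add_left sum.distrib)
  also have "\<dots> = lin_ext mon P + lin_ext mon Q"
    by (simp add: lin_ext_superset[symmetric])
  finally show ?thesis .
qed

lemma lin_ext_zero [simp]: "lin_ext mon 0 = 0"
  by (simp add: lin_ext_def)

lemma lin_ext_diff: "lin_ext mon (P - Q) = lin_ext mon P - lin_ext mon Q"
  using lin_ext_add[of mon "P - Q" Q] by (simp add: algebra_simps)

lemma lin_ext_smult: "lin_ext mon (smult c P) = smult c (lin_ext mon P)"
proof -
  have "lin_ext mon (smult c P) = (\<Sum>k\<in>Poly_Mapping.keys P. smult (Poly_Mapping.lookup (smult c P) k) (mon k))"
    by (rule lin_ext_superset) (auto simp: keys_smult[THEN subsetD])
  also have "\<dots> = smult c (lin_ext mon P)"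
    by (simp add: lin_ext_def smult_sum lookup_smult smult_smult)
  finally show ?thesis .
qed

lemma lin_ext_single: "lin_ext mon (Poly_Mapping.single k c) = smult c (mon k)"
  by (simp add: lin_ext_def)

lemma lin_ext_sum: "lin_ext mon (sum f A) = (\<Sum>x\<in>A. lin_ext mon (f x))"
  by (induction A rule: infinite_finite_induct) (simp_all add: lin_ext_add)

lemma lin_ext_mult:
  assumes mon: "\<And>k l. mon (k + l) = mon k * mon l"
  shows "lin_ext mon (P * Q) = lin_ext mon P * lin_ext mon Q"
proof -
  let ?P = "\<lambda>k. Poly_Mapping.single k (Poly_Mapping.lookup P k)"
  let ?Q = "\<lambda>k. Poly_Mapping.single k (Poly_Mapping.lookup Q k)"
  have "P * Q = (\<Sum>k\<in>Poly_Mapping.keys P. ?P k) * (\<Sum>l\<in>Poly_Mapping.keys Q. ?Q l)"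
    using poly_expand[of P] poly_expand[of Q] by simp
  also have "\<dots> = (\<Sum>k\<in>Poly_Mapping.keys P. \<Sum>l\<in>Poly_Mapping.keys Q. ?P k * ?Q l)"
    by (rule sum_product)
  finally have "lin_ext mon (P * Q) = (\<Sum>k\<in>Poly_Mapping.keys P. \<Sum>l\<in>Poly_Mapping.keys Q. lin_ext mon (?P k * ?Q l))"
    by (simp add: lin_ext_sum)
  also have "\<dots> = (\<Sum>k\<in>Poly_Mapping.keys P. \<Sum>l\<in>Poly_Mapping.keys Q.
       smult (Poly_Mapping.lookup P k) (mon k) * smult (Poly_Mapping.lookup Q l) (mon l))"
    by (simp add: mult_single lin_ext_single mon smult_mult_left smult_mult_right smult_smult mult.commute)
  also have "\<dots> = lin_ext mon P * lin_ext mon Q"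
    by (simp add: lin_ext_def sum_product)
  finally show ?thesis .
qed

lemma lin_ext_one:
  assumes "mon 0 = 1"
  shows "lin_ext mon 1 = 1"
  using assms by (simp add: lin_ext_def)

lemma ideal_sum:
  assumes "is_ideal I" "\<And>x. x \<in> A \<Longrightarrow> f x \<in> I"
  shows "sum f A \<in> I"
  using assms(2)
proof (induction A rule: infinite_finite_induct)
  case (infinite A) then show ?case using assms(1) by (simp add: is_ideal_def)
next
  case empty then show ?case using assms(1) by (simp add: is_ideal_def)
next
  case (insert x F) then show ?case using assms(1) by (simp add: is_ideal_def)
qed

lemma ideal_uminus:
  assumes "is_ideal I" "a \<in> I" shows "- a \<in> I"
  using assms smult_minus1[of a] unfolding is_ideal_def by metis

lemma ideal_diff:
  assumes "is_ideal I" "a \<in> I" "b \<in> I" shows "a - b \<in> I"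
  using assms ideal_uminus[of I b] unfolding is_ideal_def by (metis diff_conv_add_uminus)

lemma ideal_mult_cong:
  assumes I: "is_ideal I" and "x - y \<in> I" "x' - y' \<in> I"
  shows "x * x' - y * y' \<in> I"
proof -
  have "x * x' - y * y' = (x - y) * x' + y * (x' - y')" by (simp add: algebra_simps)
  then show ?thesis using assms unfolding is_ideal_def by metis
qed

lemma ideal_prod_cong:
  assumes I: "is_ideal I" and "\<And>v. v \<in> A \<Longrightarrow> f v - g v \<in> I" and "finite A"
  shows "prod f A - prod g A \<in> I"
  using assms(3,2)
proof (induction A rule: finite_induct)
  case empty then show ?case using I by (simp add: is_ideal_def)
next
  case (insert x F) then show ?case using ideal_mult_cong[OF I] by simp
qed

lemma ideal_power_cong:
  assumes I: "is_ideal I" and "x - y \<in> I"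
  shows "x ^ n - y ^ n \<in> I"
proof (induction n)
  case 0 then show ?case using I by (simp add: is_ideal_def)
next
  case (Suc n) then show ?case using ideal_mult_cong[OF I assms(2)] by simp
qed

lemma lin_ext_cong:
  assumes I: "is_ideal I" and "\<And>k. k \<in> Poly_Mapping.keys P \<Longrightarrow> mon1 k - mon2 k \<in> I"
  shows "lin_ext mon1 P - lin_ext mon2 P \<in> I"
proof -
  have "lin_ext mon1 P - lin_ext mon2 P = (\<Sum>k\<in>Poly_Mapping.keys P. smult (Poly_Mapping.lookup P k) (mon1 k - mon2 k))"
    by (simp add: lin_ext_def smult_diff sum_subtractf)
  also have "\<dots> \<in> I"
    by (rule ideal_sum[OF I]) (use assms in \<open>auto simp: is_ideal_def\<close>)
  finally show ?thesis .
qed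

lemma ideal_gen_ideal: "is_ideal (ideal_gen u)"
  unfolding ideal_gen_def is_ideal_def by blast

lemma ideal_gen_mem: "u \<in> ideal_gen u"
  unfolding ideal_gen_def by blast

lemma ideal_gen_least: "is_ideal I \<Longrightarrow> u \<in> I \<Longrightarrow> ideal_gen u \<subseteq> I"
  unfolding ideal_gen_def by blast


definition mona :: "('v \<Rightarrow> ('m::monoid_add \<Rightarrow>\<^sub>0 'a::field)) \<Rightarrow> 'v word \<Rightarrow> ('m \<Rightarrow>\<^sub>0 'a)" where
  "mona \<sigma> w = foldr (\<lambda>v acc. \<sigma> v * acc) (letters w) 1"

lemma eval_assoc_lin: "eval_assoc \<sigma> = lin_ext (mona \<sigma>)"
  by (simp add: eval_assoc_def lin_ext_def mona_def fun_eq_iff)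

lemma foldr_mult: "foldr (\<lambda>v acc. \<sigma> v * acc) xs a = foldr (\<lambda>v acc. \<sigma> v * acc) xs 1 * (a :: 'b::monoid_mult)"
  by (induction xs) (simp_all add: mult.assoc)

lemma mona_add: "mona \<sigma> (k + l) = mona \<sigma> k * mona \<sigma> l"
  unfolding mona_def plus_word_def by (simp add: foldr_mult[of _ _ "foldr _ _ 1"])

lemma mona_zero: "mona \<sigma> 0 = 1"
  by (simp add: mona_def zero_word_def)

definition monc :: "('v \<Rightarrow> ('m::comm_monoid_add \<Rightarrow>\<^sub>0 'a::field)) \<Rightarrow> ('v \<Rightarrow>\<^sub>0 nat) \<Rightarrow> ('m \<Rightarrow>\<^sub>0 'a)" where
  "monc \<sigma> m = (\<Prod>v\<in>Poly_Mapping.keys m. \<sigma> v ^ Poly_Mapping.lookup m v)"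

lemma eval_comm_lin: "eval_comm \<sigma> = lin_ext (monc \<sigma>)"
  by (simp add: eval_comm_def lin_ext_def monc_def fun_eq_iff)

lemma monc_superset:
  assumes "finite S" "Poly_Mapping.keys m \<subseteq> S"
  shows "monc \<sigma> m = (\<Prod>v\<in>S. \<sigma> v ^ Poly_Mapping.lookup m v)"
  unfolding monc_def
  by (rule prod.mono_neutral_left) (use assms in \<open>auto simp: in_keys_iff\<close>)

lemma monc_add: "monc \<sigma> (k + l) = monc \<sigma> k * monc \<sigma> l"
proof -
  let ?S = "Poly_Mapping.keys k \<union> Poly_Mapping.keys l"
  have "monc \<sigma> (k + l) = (\<Prod>v\<in>?S. \<sigma> v ^ Poly_Mapping.lookup (k + l) v)"
    by (rule monc_superset) (auto dest: keys_add[THEN subsetD])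
  also have "\<dots> = (\<Prod>v\<in>?S. \<sigma> v ^ Poly_Mapping.lookup k v) * (\<Prod>v\<in>?S. \<sigma> v ^ Poly_Mapping.lookup l v)"
    by (simp add: lookup_add power_add prod.distrib)
  also have "\<dots> = monc \<sigma> k * monc \<sigma> l"
    by (simp add: monc_superset[symmetric])
  finally show ?thesis .
qed

lemma monc_zero: "monc \<sigma> 0 = 1"
  by (simp add: monc_def)

lemma alg_end_zero: "alg_end \<eta> \<Longrightarrow> \<eta> 0 = 0"
  unfolding alg_end_def by (metis add_0 add_left_cancel add.right_neutral)

lemma kernel_ideal:
  "is_ideal {p. \<forall>\<eta>. alg_end \<eta> \<and> \<eta> u = 0 \<longrightarrow> \<eta> p = 0}"
  unfolding is_ideal_def
proof (intro conjI ballI allI)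
  show "0 \<in> {p. \<forall>\<eta>. alg_end \<eta> \<and> \<eta> u = 0 \<longrightarrow> \<eta> p = 0}" by (auto simp: alg_end_zero)
next
  fix a b assume "a \<in> {p. \<forall>\<eta>. alg_end \<eta> \<and> \<eta> u = 0 \<longrightarrow> \<eta> p = 0}" "b \<in> {p. \<forall>\<eta>. alg_end \<eta> \<and> \<eta> u = 0 \<longrightarrow> \<eta> p = 0}"
  then show "a + b \<in> {p. \<forall>\<eta>. alg_end \<eta> \<and> \<eta> u = 0 \<longrightarrow> \<eta> p = 0}" by (clarsimp, metis alg_end_def add_0)
next
  fix c a assume "a \<in> {p. \<forall>\<eta>. alg_end \<eta> \<and> \<eta> u = 0 \<longrightarrow> \<eta> p = 0}"
  then show "smult c a \<in> {p. \<forall>\<eta>. alg_end \<eta> \<and> \<eta> u = 0 \<longrightarrow> \<eta> p = 0}" by (clarsimp, metis alg_end_def smult_0_right)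
next
  fix a b assume a: "a \<in> {p. \<forall>\<eta>. alg_end \<eta> \<and> \<eta> u = 0 \<longrightarrow> \<eta> p = 0}"
  show "a * b \<in> {p. \<forall>\<eta>. alg_end \<eta> \<and> \<eta> u = 0 \<longrightarrow> \<eta> p = 0}"
    using a by (clarsimp, metis alg_end_def mult_zero_left mult_zero_right)
  show "b * a \<in> {p. \<forall>\<eta>. alg_end \<eta> \<and> \<eta> u = 0 \<longrightarrow> \<eta> p = 0}"
    using a by (clarsimp, metis alg_end_def mult_zero_left mult_zero_right)
qed

lemma main_abstract:
  fixes ev :: "(('m::monoid_add \<Rightarrow>\<^sub>0 'a::field) \<Rightarrow> ('m \<Rightarrow>\<^sub>0 'a)) \<Rightarrow> ('k::monoid_add \<Rightarrow>\<^sub>0 'a) \<Rightarrow> ('m \<Rightarrow>\<^sub>0 'a)"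
  assumes bij: "bij_betw (ev id) D UNIV"
  and D_add: "\<And>P Q. P \<in> D \<Longrightarrow> Q \<in> D \<Longrightarrow> P + Q \<in> D"
  and D_mult: "\<And>P Q. P \<in> D \<Longrightarrow> Q \<in> D \<Longrightarrow> P * Q \<in> D"
  and D_smult: "\<And>c P. P \<in> D \<Longrightarrow> smult c P \<in> D"
  and D_one: "1 \<in> D"
  and ev_add: "\<And>\<sigma> P Q. ev \<sigma> (P + Q) = ev \<sigma> P + ev \<sigma> Q"
  and ev_mult: "\<And>\<sigma> P Q. ev \<sigma> (P * Q) = ev \<sigma> P * ev \<sigma> Q"
  and ev_smult: "\<And>\<sigma> c P. ev \<sigma> (smult c P) = smult c (ev \<sigma> P)"
  and ev_one: "\<And>\<sigma>. ev \<sigma> 1 = 1"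
  and ev_cong: "\<And>\<sigma> \<tau> I P. is_ideal I \<Longrightarrow> (\<And>v. \<sigma> v - \<tau> v \<in> I) \<Longrightarrow> ev \<sigma> P - ev \<tau> P \<in> I"
  and gen: "\<exists>P\<in>D. ev id P = u \<and> (\<forall>\<sigma>. ev \<sigma> P = \<sigma> u)"
  shows "{p. \<forall>\<eta>. alg_end \<eta> \<and> \<eta> u = 0 \<longrightarrow> \<eta> p = 0} = ideal_gen u"
proof
  show "ideal_gen u \<subseteq> {p. \<forall>\<eta>. alg_end \<eta> \<and> \<eta> u = 0 \<longrightarrow> \<eta> p = 0}"
    by (rule ideal_gen_least[OF kernel_ideal]) simp
next
  show "{p. \<forall>\<eta>. alg_end \<eta> \<and> \<eta> u = 0 \<longrightarrow> \<eta> p = 0} \<subseteq> ideal_gen u"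
  proof
    fix p assume p: "p \<in> {p. \<forall>\<eta>. alg_end \<eta> \<and> \<eta> u = 0 \<longrightarrow> \<eta> p = 0}"
    define \<sigma> :: "('m \<Rightarrow>\<^sub>0 'a) \<Rightarrow> ('m \<Rightarrow>\<^sub>0 'a)" where "\<sigma> = (\<lambda>b. if b = u then 0 else b)"
    define inv where "inv = the_inv_into D (ev id)"
    define \<eta> where "\<eta> = (\<lambda>q. ev \<sigma> (inv q))"
    have inj: "inj_on (ev id) D" and surj: "ev id ` D = UNIV" using bij by (auto simp: bij_betw_def)
    have invD: "inv q \<in> D" for q
      unfolding inv_def by (rule the_inv_into_into[OF inj]) (auto simp: surj)
    have ev_inv: "ev id (inv q) = q" for q
      unfolding inv_def by (rule f_the_inv_into_f[OF inj]) (auto simp: surj)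
    have inv_eq: "inv q = P" if "P \<in> D" "ev id P = q" for P q
      unfolding inv_def using the_inv_into_f_f[OF inj that(1)] that(2) by simp
    have "alg_end \<eta>"
      unfolding alg_end_def
    proof (intro conjI allI)
      fix q r
      have "inv (q + r) = inv q + inv r"
        by (rule inv_eq) (simp_all add: D_add invD ev_add ev_inv)
      then show "\<eta> (q + r) = \<eta> q + \<eta> r" by (simp add: \<eta>_def ev_add)
      have "inv (q * r) = inv q * inv r"
        by (rule inv_eq) (simp_all add: D_mult invD ev_mult ev_inv)
      then show "\<eta> (q * r) = \<eta> q * \<eta> r" by (simp add: \<eta>_def ev_mult)
    next
      fix c q
      have "inv (smult c q) = smult c (inv q)"
        by (rule inv_eq) (simp_all add: D_smult invD ev_smult ev_inv)
      then show "\<eta> (smult c q) = smult c (\<eta> q)" by (simp add: \<eta>_def ev_smult)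
    next
      have "inv 1 = 1" by (rule inv_eq) (simp_all add: D_one ev_one)
      then show "\<eta> 1 = 1" by (simp add: \<eta>_def ev_one)
    qed
    moreover have "\<eta> u = 0"
    proof -
      from gen obtain P where P: "P \<in> D" "ev id P = u" "\<And>\<sigma>. ev \<sigma> P = \<sigma> u" by blast
      have "inv u = P" by (rule inv_eq) (use P in auto)
      then show ?thesis by (simp add: \<eta>_def P \<sigma>_def)
    qed
    ultimately have "\<eta> p = 0" using p by blast
    have "ev id (inv p) - ev \<sigma> (inv p) \<in> ideal_gen u"
    proof (rule ev_cong[OF ideal_gen_ideal])
      fix v
      show "id v - \<sigma> v \<in> ideal_gen u"
        using ideal_gen_mem[of u] ideal_gen_ideal[of u]
        by (auto simp: \<sigma>_def is_ideal_def)
    qed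
    then show "p \<in> ideal_gen u" using \<open>\<eta> p = 0\<close> by (simp add: \<eta>_def ev_inv)
  qed
qed


section \<open>Commutative and associative cases\<close>

lemma comm_case:
  fixes u :: "('a::field, 'x) comm_poly"
  assumes B: "comm_free_gen B" and uB: "u \<in> B"
  shows "{p. \<forall>\<eta>. alg_end \<eta> \<and> \<eta> u = 0 \<longrightarrow> \<eta> p = 0} = ideal_gen u"
proof (rule main_abstract[where ev = eval_comm and D = "{P. \<forall>m\<in>Poly_Mapping.keys P. Poly_Mapping.keys m \<subseteq> B}"])
  show "bij_betw (eval_comm id) {P. \<forall>m\<in>Poly_Mapping.keys P. Poly_Mapping.keys m \<subseteq> B} UNIV"
    using B by (simp add: comm_free_gen_def)
next
  fix P Q :: "(('a, 'x) comm_poly \<Rightarrow>\<^sub>0 nat) \<Rightarrow>\<^sub>0 'a"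
  assume P: "P \<in> {P. \<forall>m\<in>Poly_Mapping.keys P. Poly_Mapping.keys m \<subseteq> B}"
    and Q: "Q \<in> {P. \<forall>m\<in>Poly_Mapping.keys P. Poly_Mapping.keys m \<subseteq> B}"
  show "P + Q \<in> {P. \<forall>m\<in>Poly_Mapping.keys P. Poly_Mapping.keys m \<subseteq> B}"
    using P Q by (auto dest!: keys_add[THEN subsetD])
  show "P * Q \<in> {P. \<forall>m\<in>Poly_Mapping.keys P. Poly_Mapping.keys m \<subseteq> B}"
    using P Q by (fastforce dest!: keys_mult[THEN subsetD] keys_add[THEN subsetD])
next
  fix c and P :: "(('a, 'x) comm_poly \<Rightarrow>\<^sub>0 nat) \<Rightarrow>\<^sub>0 'a"
  assume P: "P \<in> {P. \<forall>m\<in>Poly_Mapping.keys P. Poly_Mapping.keys m \<subseteq> B}"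
  show "smult c P \<in> {P. \<forall>m\<in>Poly_Mapping.keys P. Poly_Mapping.keys m \<subseteq> B}"
    using P keys_smult[of c P] by auto
next
  show "1 \<in> {P. \<forall>m\<in>Poly_Mapping.keys P. Poly_Mapping.keys m \<subseteq> B}" by simp
next
  fix \<sigma> :: "('a, 'x) comm_poly \<Rightarrow> ('a, 'x) comm_poly" and P Q :: "(('a, 'x) comm_poly \<Rightarrow>\<^sub>0 nat) \<Rightarrow>\<^sub>0 'a"
  show "eval_comm \<sigma> (P + Q) = eval_comm \<sigma> P + eval_comm \<sigma> Q"
    by (simp add: eval_comm_lin lin_ext_add)
  show "eval_comm \<sigma> (P * Q) = eval_comm \<sigma> P * eval_comm \<sigma> Q"
    by (simp add: eval_comm_lin lin_ext_mult monc_add)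
next
  fix \<sigma> :: "('a, 'x) comm_poly \<Rightarrow> ('a, 'x) comm_poly" and c and P :: "(('a, 'x) comm_poly \<Rightarrow>\<^sub>0 nat) \<Rightarrow>\<^sub>0 'a"
  show "eval_comm \<sigma> (smult c P) = smult c (eval_comm \<sigma> P)"
    by (simp add: eval_comm_lin lin_ext_smult)
next
  fix \<sigma> :: "('a, 'x) comm_poly \<Rightarrow> ('a, 'x) comm_poly"
  show "eval_comm \<sigma> 1 = 1"
    by (simp add: eval_comm_lin lin_ext_one monc_zero)
next
  fix \<sigma> \<tau> :: "('a, 'x) comm_poly \<Rightarrow> ('a, 'x) comm_poly" and I and P :: "(('a, 'x) comm_poly \<Rightarrow>\<^sub>0 nat) \<Rightarrow>\<^sub>0 'a"
  assume I: "is_ideal I" and st: "\<And>v. \<sigma> v - \<tau> v \<in> I"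
  show "eval_comm \<sigma> P - eval_comm \<tau> P \<in> I"
    unfolding eval_comm_lin
  proof (rule lin_ext_cong[OF I])
    fix k
    show "monc \<sigma> k - monc \<tau> k \<in> I"
      unfolding monc_def
      by (rule ideal_prod_cong[OF I ideal_power_cong[OF I st]]) simp
  qed
next
  show "\<exists>P\<in>{P. \<forall>m\<in>Poly_Mapping.keys P. Poly_Mapping.keys m \<subseteq> B}. eval_comm id P = u \<and> (\<forall>\<sigma>. eval_comm \<sigma> P = \<sigma> u)"
    by (rule bexI[where x = "Poly_Mapping.single (Poly_Mapping.single u 1) 1"])
       (simp_all add: eval_comm_lin lin_ext_single monc_def uB)
qed

lemma assoc_case:
  fixes u :: "('a::field, 'x) assoc_poly"
  assumes B: "assoc_free_gen B" and uB: "u \<in> B"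
  shows "{p. \<forall>\<eta>. alg_end \<eta> \<and> \<eta> u = 0 \<longrightarrow> \<eta> p = 0} = ideal_gen u"
proof (rule main_abstract[where ev = eval_assoc and D = "{P. \<forall>w\<in>Poly_Mapping.keys P. set (letters w) \<subseteq> B}"])
  show "bij_betw (eval_assoc id) {P. \<forall>w\<in>Poly_Mapping.keys P. set (letters w) \<subseteq> B} UNIV"
    using B by (simp add: assoc_free_gen_def)
next
  fix P Q :: "('a, 'x) assoc_poly word \<Rightarrow>\<^sub>0 'a"
  assume P: "P \<in> {P. \<forall>w\<in>Poly_Mapping.keys P. set (letters w) \<subseteq> B}"
    and Q: "Q \<in> {P. \<forall>w\<in>Poly_Mapping.keys P. set (letters w) \<subseteq> B}"
  show "P + Q \<in> {P. \<forall>w\<in>Poly_Mapping.keys P. set (letters w) \<subseteq> B}"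
    using P Q by (auto dest!: keys_add[THEN subsetD])
  show "P * Q \<in> {P. \<forall>w\<in>Poly_Mapping.keys P. set (letters w) \<subseteq> B}"
    using P Q by (fastforce dest!: keys_mult[THEN subsetD] simp: plus_word_def)
next
  fix c and P :: "('a, 'x) assoc_poly word \<Rightarrow>\<^sub>0 'a"
  assume P: "P \<in> {P. \<forall>w\<in>Poly_Mapping.keys P. set (letters w) \<subseteq> B}"
  show "smult c P \<in> {P. \<forall>w\<in>Poly_Mapping.keys P. set (letters w) \<subseteq> B}"
    using P keys_smult[of c P] by auto
next
  show "1 \<in> {P. \<forall>w\<in>Poly_Mapping.keys P. set (letters w) \<subseteq> B}" by (simp add: zero_word_def)
next
  fix \<sigma> :: "('a, 'x) assoc_poly \<Rightarrow> ('a, 'x) assoc_poly" and P Q :: "('a, 'x) assoc_poly word \<Rightarrow>\<^sub>0 'a"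
  show "eval_assoc \<sigma> (P + Q) = eval_assoc \<sigma> P + eval_assoc \<sigma> Q"
    by (simp add: eval_assoc_lin lin_ext_add)
  show "eval_assoc \<sigma> (P * Q) = eval_assoc \<sigma> P * eval_assoc \<sigma> Q"
    by (simp add: eval_assoc_lin lin_ext_mult mona_add)
next
  fix \<sigma> :: "('a, 'x) assoc_poly \<Rightarrow> ('a, 'x) assoc_poly" and c and P :: "('a, 'x) assoc_poly word \<Rightarrow>\<^sub>0 'a"
  show "eval_assoc \<sigma> (smult c P) = smult c (eval_assoc \<sigma> P)"
    by (simp add: eval_assoc_lin lin_ext_smult)
next
  fix \<sigma> :: "('a, 'x) assoc_poly \<Rightarrow> ('a, 'x) assoc_poly"
  show "eval_assoc \<sigma> 1 = 1"
    by (simp add: eval_assoc_lin lin_ext_one mona_zero)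
next
  fix \<sigma> \<tau> :: "('a, 'x) assoc_poly \<Rightarrow> ('a, 'x) assoc_poly" and I and P :: "('a, 'x) assoc_poly word \<Rightarrow>\<^sub>0 'a"
  assume I: "is_ideal I" and st: "\<And>v. \<sigma> v - \<tau> v \<in> I"
  show "eval_assoc \<sigma> P - eval_assoc \<tau> P \<in> I"
    unfolding eval_assoc_lin
  proof (rule lin_ext_cong[OF I])
    fix k
    have "foldr (\<lambda>v acc. \<sigma> v * acc) xs 1 - foldr (\<lambda>v acc. \<tau> v * acc) xs 1 \<in> I" for xs
    proof (induction xs)
      case Nil then show ?case using I by (simp add: is_ideal_def)
    next
      case (Cons a xs) then show ?case using ideal_mult_cong[OF I st] by simp
    qed
    then show "mona \<sigma> k - mona \<tau> k \<in> I" by (simp add: mona_def)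
  qed
next
  show "\<exists>P\<in>{P. \<forall>w\<in>Poly_Mapping.keys P. set (letters w) \<subseteq> B}. eval_assoc id P = u \<and> (\<forall>\<sigma>. eval_assoc \<sigma> P = \<sigma> u)"
    by (rule bexI[where x = "Poly_Mapping.single (Word [u]) 1"])
       (simp_all add: eval_assoc_lin lin_ext_single mona_def uB)
qed


section \<open>Lie case\<close>

lemma free_lie_zero: "0 \<in> free_lie"
  unfolding free_lie_def by (rule lie_closure.zero)

lemma free_lie_add: "p \<in> free_lie \<Longrightarrow> q \<in> free_lie \<Longrightarrow> p + q \<in> free_lie"
  unfolding free_lie_def by (rule lie_closure.add)

lemma free_lie_smult: "p \<in> free_lie \<Longrightarrow> smult c p \<in> free_lie"
  unfolding free_lie_def by (rule lie_closure.smult)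

lemma free_lie_bracket: "p \<in> free_lie \<Longrightarrow> q \<in> free_lie \<Longrightarrow> bracket p q \<in> free_lie"
  unfolding free_lie_def by (rule lie_closure.brk)

lemma lie_ideal_free_lie: "lie_ideal (free_lie :: ('a::field, 'x) assoc_poly set)"
  unfolding lie_ideal_def by (auto intro: free_lie_zero free_lie_add free_lie_smult free_lie_bracket)

lemma lie_ideal_gen_ideal:
  assumes "(u :: ('a::field, 'x) assoc_poly) \<in> free_lie"
  shows "lie_ideal (lie_ideal_gen u)"
proof -
  have sub: "lie_ideal_gen u \<subseteq> free_lie"
    unfolding lie_ideal_gen_def using lie_ideal_free_lie assms by blast
  show ?thesis
    unfolding lie_ideal_def
  proof (intro conjI sub ballI allI)
    show "0 \<in> lie_ideal_gen u" unfolding lie_ideal_gen_def lie_ideal_def by blast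
  next
    fix a b :: "('a, 'x) assoc_poly" assume "a \<in> lie_ideal_gen u" "b \<in> lie_ideal_gen u"
    then show "a + b \<in> lie_ideal_gen u" unfolding lie_ideal_gen_def lie_ideal_def by blast
  next
    fix c and a :: "('a, 'x) assoc_poly" assume "a \<in> lie_ideal_gen u"
    then show "smult c a \<in> lie_ideal_gen u" unfolding lie_ideal_gen_def lie_ideal_def by blast
  next
    fix a b :: "('a, 'x) assoc_poly" assume "a \<in> lie_ideal_gen u" "b \<in> free_lie"
    then show "bracket a b \<in> lie_ideal_gen u" unfolding lie_ideal_gen_def lie_ideal_def by blast
  qed
qed

lemma lie_ideal_gen_mem: "u \<in> lie_ideal_gen u"
  unfolding lie_ideal_gen_def by blast

lemma lie_ideal_gen_least: "lie_ideal I \<Longrightarrow> u \<in> I \<Longrightarrow> lie_ideal_gen u \<subseteq> I"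
  unfolding lie_ideal_gen_def by blast

lemma lie_ideal_diff:
  assumes "lie_ideal I" "a \<in> I" "b \<in> I" shows "a - b \<in> I"
proof -
  have "smult (-1) b \<in> I" using assms unfolding lie_ideal_def by blast
  then have "- b \<in> I" by (simp add: smult_minus1)
  then show ?thesis using assms unfolding lie_ideal_def by (metis diff_conv_add_uminus)
qed

lemma bracket_diff_split:
  "bracket a b - bracket a' b' = bracket (a - a') b + smult (-1) (bracket (b - b') a')"
  by (simp add: bracket_def smult_minus1 algebra_simps)

lemma eval_assoc_bracket:
  "eval_assoc \<sigma> (bracket P Q) = bracket (eval_assoc \<sigma> P) (eval_assoc \<sigma> Q)"
  by (simp add: bracket_def eval_assoc_lin lin_ext_diff lin_ext_mult mona_add)

lemma eval_assoc_avar: "eval_assoc \<sigma> (avar b) = \<sigma> b"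
  by (simp add: avar_def eval_assoc_lin lin_ext_single mona_def)

lemma eval_lie_closure:
  assumes "P \<in> lie_closure (avar ` B)" "\<And>b. b \<in> B \<Longrightarrow> \<sigma> b \<in> free_lie"
  shows "eval_assoc \<sigma> P \<in> free_lie"
  using assms(1)
proof (induction rule: lie_closure.induct)
  case (gen g) then show ?case using assms(2) by (auto simp: eval_assoc_avar)
next
  case zero then show ?case by (simp add: eval_assoc_lin free_lie_zero)
next
  case (add p q) then show ?case by (simp add: eval_assoc_lin lin_ext_add free_lie_add)
next
  case (smult p c) then show ?case by (simp add: eval_assoc_lin lin_ext_smult free_lie_smult)
next
  case (brk p q) then show ?case by (simp add: eval_assoc_bracket free_lie_bracket)
qed

lemma lie_end_zero: "lie_end \<eta> \<Longrightarrow> \<eta> 0 = 0"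
  unfolding lie_end_def using free_lie_zero by (metis add_0 add_left_cancel add.right_neutral)

lemma lie_case:
  fixes u :: "('a::field, 'x) assoc_poly"
  assumes B: "lie_free_gen B" and uB: "u \<in> B"
  shows "{p \<in> free_lie. \<forall>\<eta>. lie_end \<eta> \<and> \<eta> u = 0 \<longrightarrow> \<eta> p = 0} = lie_ideal_gen u"
proof -
  let ?L = "lie_closure (avar ` B)"
  let ?K = "{p \<in> free_lie. \<forall>\<eta>. lie_end \<eta> \<and> \<eta> u = 0 \<longrightarrow> \<eta> p = 0}"
  have Bfl: "B \<subseteq> free_lie" and bij: "bij_betw (eval_assoc id) ?L free_lie"
    using B by (auto simp: lie_free_gen_def)
  have ufl: "u \<in> free_lie" using Bfl uB by blast
  have "lie_ideal ?K"
    unfolding lie_ideal_def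
  proof (intro conjI ballI allI)
    show "?K \<subseteq> free_lie" by blast
    show "0 \<in> ?K" by (auto simp: free_lie_zero lie_end_zero)
  next
    fix a b :: "('a, 'x) assoc_poly" assume a: "a \<in> ?K" and b: "b \<in> ?K"
    show "a + b \<in> ?K"
    proof (intro CollectI conjI allI impI)
      show "a + b \<in> free_lie" using a b by (auto intro: free_lie_add)
      fix \<eta> assume "lie_end \<eta> \<and> \<eta> u = 0"
      then show "\<eta> (a + b) = 0" using a b unfolding lie_end_def by auto
    qed
  next
    fix c and a :: "('a, 'x) assoc_poly" assume a: "a \<in> ?K"
    show "smult c a \<in> ?K"
    proof (intro CollectI conjI allI impI)
      show "smult c a \<in> free_lie" using a by (auto intro: free_lie_smult)
      fix \<eta> assume "lie_end \<eta> \<and> \<eta> u = 0"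
      then show "\<eta> (smult c a) = 0" using a unfolding lie_end_def by auto
    qed
  next
    fix a b :: "('a, 'x) assoc_poly" assume a: "a \<in> ?K" and b: "b \<in> free_lie"
    show "bracket a b \<in> ?K"
    proof (intro CollectI conjI allI impI)
      show "bracket a b \<in> free_lie" using a b by (auto intro: free_lie_bracket)
      fix \<eta> assume "lie_end \<eta> \<and> \<eta> u = 0"
      then show "\<eta> (bracket a b) = 0" using a b unfolding lie_end_def by (auto simp: bracket_def)
    qed
  qed
  then have sup: "lie_ideal_gen u \<subseteq> ?K"
    by (rule lie_ideal_gen_least) (use ufl in auto)
  have "?K \<subseteq> lie_ideal_gen u"
  proof
    fix p assume p: "p \<in> ?K"
    define \<sigma> :: "('a, 'x) assoc_poly \<Rightarrow> ('a, 'x) assoc_poly" where "\<sigma> = (\<lambda>b. if b = u then 0 else b)"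
    define inv where "inv = the_inv_into ?L (eval_assoc id)"
    define \<eta> where "\<eta> = (\<lambda>q. eval_assoc \<sigma> (inv q))"
    have inj: "inj_on (eval_assoc id) ?L" and surj: "eval_assoc id ` ?L = free_lie"
      using bij by (auto simp: bij_betw_def)
    have invL: "inv q \<in> ?L" if "q \<in> free_lie" for q
      unfolding inv_def by (rule the_inv_into_into[OF inj]) (use that surj in auto)
    have ev_inv: "eval_assoc id (inv q) = q" if "q \<in> free_lie" for q
      unfolding inv_def by (rule f_the_inv_into_f[OF inj]) (use that surj in auto)
    have inv_eq: "inv q = P" if "P \<in> ?L" "eval_assoc id P = q" for P q
      unfolding inv_def using the_inv_into_f_f[OF inj that(1)] that(2) by simp
    have \<sigma>fl: "\<sigma> b \<in> free_lie" if "b \<in> B" for b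
      using that Bfl by (auto simp: \<sigma>_def free_lie_zero)
    have "lie_end \<eta>"
      unfolding lie_end_def
    proof (intro conjI ballI allI)
      fix q :: "('a, 'x) assoc_poly" assume q: "q \<in> free_lie"
      show "\<eta> q \<in> free_lie" unfolding \<eta>_def by (rule eval_lie_closure[OF invL[OF q] \<sigma>fl])
    next
      fix q r :: "('a, 'x) assoc_poly" assume q: "q \<in> free_lie" and r: "r \<in> free_lie"
      have "inv (q + r) = inv q + inv r"
        by (rule inv_eq) (simp_all add: lie_closure.add invL q r eval_assoc_lin lin_ext_add ev_inv[OF q, unfolded eval_assoc_lin] ev_inv[OF r, unfolded eval_assoc_lin])
      then show "\<eta> (q + r) = \<eta> q + \<eta> r" by (simp add: \<eta>_def eval_assoc_lin lin_ext_add)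
      have "inv (bracket q r) = bracket (inv q) (inv r)"
        by (rule inv_eq) (simp_all add: lie_closure.brk invL q r eval_assoc_bracket ev_inv[OF q] ev_inv[OF r])
      then show "\<eta> (bracket q r) = bracket (\<eta> q) (\<eta> r)" by (simp add: \<eta>_def eval_assoc_bracket)
    next
      fix c and q :: "('a, 'x) assoc_poly" assume q: "q \<in> free_lie"
      have "inv (smult c q) = smult c (inv q)"
        by (rule inv_eq) (simp_all add: lie_closure.smult invL q eval_assoc_lin lin_ext_smult ev_inv[OF q, unfolded eval_assoc_lin])
      then show "\<eta> (smult c q) = smult c (\<eta> q)" by (simp add: \<eta>_def eval_assoc_lin lin_ext_smult)
    qed
    moreover have "\<eta> u = 0"
    proof -
      have "inv u = avar u"
        by (rule inv_eq) (simp_all add: lie_closure.gen uB eval_assoc_avar)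
      then show ?thesis by (simp add: \<eta>_def eval_assoc_avar \<sigma>_def)
    qed
    ultimately have "\<eta> p = 0" using p by blast
    have J: "lie_ideal (lie_ideal_gen u)" by (rule lie_ideal_gen_ideal[OF ufl])
    have "eval_assoc id P - eval_assoc \<sigma> P \<in> lie_ideal_gen u" if "P \<in> ?L" for P
      using that
    proof (induction rule: lie_closure.induct)
      case (gen g)
      then obtain b where "b \<in> B" "g = avar b" by blast
      then show ?case using lie_ideal_gen_mem[of u] J
        by (auto simp: eval_assoc_avar \<sigma>_def lie_ideal_def)
    next
      case zero then show ?case using J by (simp add: eval_assoc_lin lie_ideal_def)
    next
      case (add p q)
      have "eval_assoc id (p + q) - eval_assoc \<sigma> (p + q)
          = (eval_assoc id p - eval_assoc \<sigma> p) + (eval_assoc id q - eval_assoc \<sigma> q)"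
        by (simp add: eval_assoc_lin lin_ext_add algebra_simps)
      then show ?case using add J unfolding lie_ideal_def by metis
    next
      case (smult p c)
      have "eval_assoc id (smult c p) - eval_assoc \<sigma> (smult c p)
          = smult c (eval_assoc id p - eval_assoc \<sigma> p)"
        by (simp add: eval_assoc_lin lin_ext_smult smult_diff)
      then show ?case using smult J unfolding lie_ideal_def by metis
    next
      case (brk p q)
      have fl: "eval_assoc \<sigma> p \<in> free_lie" "eval_assoc id q \<in> free_lie"
        using eval_lie_closure[OF brk.hyps(1) \<sigma>fl] eval_lie_closure[of q B id] brk.hyps(2) Bfl
        by auto
      have e: "eval_assoc id (bracket p q) - eval_assoc \<sigma> (bracket p q)
          = bracket (eval_assoc id p - eval_assoc \<sigma> p) (eval_assoc id q)
            + smult (-1) (bracket (eval_assoc id q - eval_assoc \<sigma> q) (eval_assoc \<sigma> p))"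
        by (simp add: eval_assoc_bracket bracket_diff_split)
      show ?case unfolding e using brk.IH fl J unfolding lie_ideal_def by metis
    qed
    from this[OF invL] p \<open>\<eta> p = 0\<close> show "p \<in> lie_ideal_gen u"
      by (simp add: \<eta>_def ev_inv) (metis diff_zero)
  qed
  with sup show ?thesis by blast
qed


theorem lemma3p1:
  shows "(\<forall>u :: ('a::field, 'x::finite) comm_poly. (\<exists>B. comm_free_gen B \<and> u \<in> B) \<longrightarrow>
            {p. \<forall>\<eta>. alg_end \<eta> \<and> \<eta> u = 0 \<longrightarrow> \<eta> p = 0} = ideal_gen u)
       \<and> (\<forall>u :: ('a, 'x) assoc_poly. (\<exists>B. assoc_free_gen B \<and> u \<in> B) \<longrightarrow>
            {p. \<forall>\<eta>. alg_end \<eta> \<and> \<eta> u = 0 \<longrightarrow> \<eta> p = 0} = ideal_gen u)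
       \<and> (\<forall>u :: ('a, 'x) assoc_poly. (\<exists>B. lie_free_gen B \<and> u \<in> B) \<longrightarrow>
            {p \<in> free_lie. \<forall>\<eta>. lie_end \<eta> \<and> \<eta> u = 0 \<longrightarrow> \<eta> p = 0} = lie_ideal_gen u)"
proof (intro conjI allI impI)
  fix u :: "('a, 'x) comm_poly"
  assume "\<exists>B. comm_free_gen B \<and> u \<in> B"
  then obtain B where "comm_free_gen B" "u \<in> B" by blast
  then show "{p. \<forall>\<eta>. alg_end \<eta> \<and> \<eta> u = 0 \<longrightarrow> \<eta> p = 0} = ideal_gen u" by (rule comm_case)
next
  fix u :: "('a, 'x) assoc_poly"
  assume "\<exists>B. assoc_free_gen B \<and> u \<in> B"
  then obtain B where "assoc_free_gen B" "u \<in> B" by blast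
  then show "{p. \<forall>\<eta>. alg_end \<eta> \<and> \<eta> u = 0 \<longrightarrow> \<eta> p = 0} = ideal_gen u" by (rule assoc_case)
next
  fix u :: "('a, 'x) assoc_poly"
  assume "\<exists>B. lie_free_gen B \<and> u \<in> B"
  then obtain B where "lie_free_gen B" "u \<in> B" by blast
  then show "{p \<in> free_lie. \<forall>\<eta>. lie_end \<eta> \<and> \<eta> u = 0 \<longrightarrow> \<eta> p = 0} = lie_ideal_gen u" by (rule lie_case)
qed


end
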